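(* If $W$ is an s-word with at least two proper letters and $W$ satisfies the parity conditions, then the projection $W|_{y=\epsilon}$ is an s-word for each proper letter $y$.
   Context: Words: alphabet $\Sigma$ with distinguished letter $\epsilon$ and letter $\sigma$; letters of $\Sigma\setminus\{\epsilon,\sigma\}$ are proper letters; $x^k$ is $k$ copies of $x$. The pattern $\pi(w)$ is obtained by repeatedly deleting $\epsilon\epsilon$; $v\sim w$ if related by cyclic shift and/or reversal; $u\approx v$ iff $\pi(u)\sim\pi(v)$; $[w]$ is the class (cyclic word). An s-word is a cyclic word of one of the forms (i) $[a^\lambda]$ with $\Sigma=\{\epsilon,a\}$, $\lambda$ odd; (ii) $[\sigma x_{i_1}^{\lambda_1}\epsilon x_{i_2}^{\lambda_2}\epsilon\cdots\epsilon x_{i_s}^{\lambda_s}]$ with positive $\lambda_j$, proper letters $x_{i_j}$, $x_{i_h}\neq x_{i_{h+1}}$, and the exponents of each proper letter summing to an even number. Induced order (type (ii)): take a representative $\sigma u$ equal to its own pattern, replace each interval $xx$ of $u$ ($x$ proper) by $x\epsilon\epsilon x$ to get $z$, let $v=\sigma\epsilon\epsilon z\epsilon\epsilon=v_1\cdots v_N$ arranged cyclically; $\sigma$ is least and for proper $x\neq y$, $x\prec y$ iff the least cyclic distance from position $1$ to a position labeled $x$ is smaller than for $y$. Parity conditions: $W$ has a representative $\sigma a^{\lambda_1}\epsilon x_{i_2}^{\lambda_2}\epsilon\cdots\epsilon x_{i_s}^{\lambda_s}$ (consecutive letters distinct), $a$ the $\prec$-least proper letter, such that (i) $\lambda_1,\lambda_s$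 are odd; (ii) for $h=2,\dots,s-1$, $\lambda_h$ is odd iff $x_{i_{h-1}}\neq x_{i_{h+1}}$ (where $x_{i_1}=a$). Projection: for $W=[w]$ with $p\ge 2$ proper letters and a proper letter $y$, $w|_{y=\epsilon}$ is obtained by replacing all occurrences of $y$ by $\epsilon$, and if $p=2$, additionally replacing $\sigma$ by the other proper letter; $W|_{y=\epsilon}=[w|_{y=\epsilon}]$. *)

theory Defs
  imports Main
begin

datatype letter = Eps | Sig | Prop nat

definition proper :: "letter \<Rightarrow> bool" where
  "proper c \<longleftrightarrow> c \<noteq> Eps \<and> c \<noteq> Sig"

type_synonym word = "letter list"

definition sim :: "word \<Rightarrow> word \<Rightarrow> bool" where
  "sim v w \<longleftrightarrow> (\<exists>n. v = rotate n w \<or> v = rev (rotate n w))"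

text \<open>One deletion of a (cyclically) adjacent pair of epsilons.\<close>
definition del_step :: "word \<Rightarrow> word \<Rightarrow> bool" where
  "del_step u v \<longleftrightarrow>
     (\<exists>xs ys. u = xs @ [Eps, Eps] @ ys \<and> v = xs @ ys) \<or>
     (\<exists>xs. u = Eps # xs @ [Eps] \<and> v = xs)"

definition is_pattern :: "word \<Rightarrow> word \<Rightarrow> bool" where
  "is_pattern w p \<longleftrightarrow> del_step\<^sup>*\<^sup>* w p \<and> \<not> (\<exists>q. del_step p q)"

definition approx :: "word \<Rightarrow> word \<Rightarrow> bool" where
  "approx u v \<longleftrightarrow> (\<exists>pu pv. is_pattern u pu \<and> is_pattern v pv \<and> sim pu pv)"

definition cls :: "word \<Rightarrow> word set" where
  "cls w = {u. approx u w}"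

fun join_eps :: "word list \<Rightarrow> word" where
  "join_eps [] = []"
| "join_eps [b] = b"
| "join_eps (b # c # bs) = b @ Eps # join_eps (c # bs)"

text \<open>Block words  sigma x1^l1 eps x2^l2 eps ... eps xs^ls.\<close>
definition blocks_word :: "(letter \<times> nat) list \<Rightarrow> word" where
  "blocks_word bs = Sig # join_eps (map (\<lambda>(x, l). replicate l x) bs)"

definition blocks_ok :: "(letter \<times> nat) list \<Rightarrow> bool" where
  "blocks_ok bs \<longleftrightarrow> bs \<noteq> [] \<and> (\<forall>(x, l) \<in> set bs. proper x \<and> 0 < l) \<and>
     (\<forall>h. Suc h < length bs \<longrightarrow> fst (bs ! h) \<noteq> fst (bs ! Suc h))"

definition s_word :: "word set \<Rightarrow> bool" where
  "s_word W \<longleftrightarrow>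
     (\<exists>a lam. proper a \<and> odd lam \<and> W = cls (replicate lam a)) \<or>
     (\<exists>bs. blocks_ok bs \<and>
        (\<forall>x. even (\<Sum>h<length bs. if fst (bs ! h) = x then snd (bs ! h) else 0)) \<and>
        W = cls (blocks_word bs))"

definition proper_letters :: "word \<Rightarrow> letter set" where
  "proper_letters w = {c \<in> set w. proper c}"

definition proper_letters_cls :: "word set \<Rightarrow> letter set" where
  "proper_letters_cls W = (\<Union>u\<in>W. proper_letters u)"

fun ins_eps :: "word \<Rightarrow> word" where
  "ins_eps [] = []"
| "ins_eps [x] = [x]"
| "ins_eps (x # y # rest) =
     (if x = y \<and> proper x then x # Eps # Eps # ins_eps (y # rest) else x # ins_eps (y # rest))"

text \<open>Least cyclic distance from position 1 (index 0) to a position labelled x.\<close>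
definition min_dist :: "word \<Rightarrow> letter \<Rightarrow> nat" where
  "min_dist v x = Min {min i (length v - i) | i. i < length v \<and> v ! i = x}"

definition induced_prec :: "word set \<Rightarrow> letter \<Rightarrow> letter \<Rightarrow> bool" where
  "induced_prec W x y \<longleftrightarrow>
     (\<exists>u. Sig # u \<in> W \<and> is_pattern (Sig # u) (Sig # u) \<and>
        (let v = Sig # Eps # Eps # ins_eps u @ [Eps, Eps] in min_dist v x < min_dist v y))"

definition parity_conditions :: "word set \<Rightarrow> bool" where
  "parity_conditions W \<longleftrightarrow>
     (\<exists>bs. blocks_ok bs \<and> blocks_word bs \<in> W \<and>
        (let a = fst (bs ! 0); s = length bs in
          a \<in> proper_letters_cls W \<and>
          (\<forall>x \<in> proper_letters_cls W. x \<noteq> a \<longrightarrow> induced_prec W a x) \<and>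
          odd (snd (bs ! 0)) \<and> odd (snd (bs ! (s - 1))) \<and>
          (\<forall>h. 1 \<le> h \<and> h < s - 1 \<longrightarrow>
             (odd (snd (bs ! h)) \<longleftrightarrow> fst (bs ! (h - 1)) \<noteq> fst (bs ! (h + 1))))))"

definition proj :: "letter \<Rightarrow> word \<Rightarrow> word" where
  "proj y w =
     (if card (proper_letters w) = 2 then
        (let b = (THE b. proper_letters w - {y} = {b}) in
          map (\<lambda>c. if c = y then Eps else if c = Sig then b else c) w)
      else map (\<lambda>c. if c = y then Eps else c) w)"

end

theory Submission
  imports Defs
begin


definition step :: "letter \<Rightarrow> word \<Rightarrow> word" where
  "step x r = (if x = Eps \<and> r \<noteq> [] \<and> hd r = Eps then tl r else x # r)"

fun nf :: "word \<Rightarrow> word" where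
  "nf [] = []"
| "nf (x # xs) = step x (nf xs)"

fun red :: "word \<Rightarrow> bool" where
  "red [] = True"
| "red [x] = True"
| "red (x # y # r) = (\<not> (x = Eps \<and> y = Eps) \<and> red (y # r))"

lemma red_Cons: "red (x # r) \<longleftrightarrow> red r \<and> (x = Eps \<longrightarrow> r = [] \<or> hd r \<noteq> Eps)"
  by (cases r) auto

lemma red_tl: "red r \<Longrightarrow> red (tl r)"
  by (cases r) (auto simp: red_Cons)

lemma red_step: "red r \<Longrightarrow> red (step x r)"
  unfolding step_def by (auto simp: red_tl red_Cons)

lemma red_nf: "red (nf u)"
  by (induction u) (auto simp: red_step)

lemma red_nf_id: "red u \<Longrightarrow> nf u = u"
  by (induction u) (auto simp: red_Cons step_def)

lemma step_step: "red r \<Longrightarrow> step Eps (step Eps r) = r"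
  unfolding step_def by (cases r) (auto simp: red_Cons)

lemma nf_EE: "nf (xs @ Eps # Eps # ys) = nf (xs @ ys)"
  by (induction xs) (auto simp: step_step red_nf)

lemma nf_app_left: "nf (a @ b) = nf (nf a @ b)"
proof (induction a)
  case Nil
  then show ?case by simp
next
  case (Cons x a)
  have r: "red (nf a)" by (rule red_nf)
  show ?case
  proof (cases "x = Eps \<and> nf a \<noteq> [] \<and> hd (nf a) = Eps")
    case True
    then obtain t where t: "nf a = Eps # t" by (cases "nf a") auto
    have "nf ((x # a) @ b) = step Eps (nf (nf a @ b))" using Cons True by simp
    also have "\<dots> = step Eps (step Eps (nf (t @ b)))" using t by simp
    also have "\<dots> = nf (t @ b)" by (rule step_step[OF red_nf])
    finally show ?thesis using True t by (simp add: step_def)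
  next
    case False
    then have "nf (x # a) = x # nf a" by (auto simp: step_def)
    then show ?thesis using Cons by simp
  qed
qed

lemma nf_nf: "nf (nf u) = nf u"
  by (rule red_nf_id[OF red_nf])

lemma nf_app_right: "nf (a @ b) = nf (a @ nf b)"
  by (induction a) (auto simp: nf_nf)

lemma nf_app: "nf (a @ b) = nf (nf a @ nf b)"
  by (metis nf_app_left nf_app_right)

lemma red_append: "red (u @ v) \<longleftrightarrow> red u \<and> red v \<and> \<not> (u \<noteq> [] \<and> v \<noteq> [] \<and> last u = Eps \<and> hd v = Eps)"
  by (induction u) (auto simp: red_Cons)

lemma red_rev: "red (rev u) \<longleftrightarrow> red u"
  by (induction u) (auto simp: red_append red_Cons last_rev hd_rev)

lemma nf_rev: "nf (rev w) = rev (nf w)"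
proof (induction w)
  case Nil
  then show ?case by simp
next
  case (Cons x xs)
  have "nf (rev (x # xs)) = nf (nf (rev xs) @ [x])" using nf_app_left by simp
  also have "\<dots> = nf (rev (nf xs) @ [x])" using Cons by simp
  also have "\<dots> = rev (step x (nf xs))"
  proof (cases "x = Eps \<and> nf xs \<noteq> [] \<and> hd (nf xs) = Eps")
    case True
    then obtain t where t: "nf xs = Eps # t" by (cases "nf xs") auto
    have rt: "red t" using red_nf[of xs] t by (simp add: red_Cons)
    have "nf (rev (nf xs) @ [x]) = nf (rev t @ Eps # Eps # [])" using t True by simp
    also have "\<dots> = rev t" using nf_EE[of "rev t" "[]"] red_nf_id rt red_rev by simp
    finally show ?thesis using t True by (simp add: step_def)
  next
    case False
    have "red (x # nf xs)" using red_nf[of xs] False by (simp add: red_Cons)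
    then have "red (rev (nf xs) @ [x])" using red_rev[of "x # nf xs"] by simp
    then have "nf (rev (nf xs) @ [x]) = rev (nf xs) @ [x]" using red_nf_id by simp
    then show ?thesis using False unfolding step_def by auto
  qed
  finally show ?case by simp
qed


definition cyc :: "word \<Rightarrow> word" where
  "cyc r = (if 2 \<le> length r \<and> hd r = Eps \<and> last r = Eps then butlast (tl r) else r)"

definition cnf :: "word \<Rightarrow> word" where
  "cnf w = cyc (nf w)"

definition rot :: "word \<Rightarrow> word \<Rightarrow> bool" where
  "rot a b \<longleftrightarrow> (\<exists>n. a = rotate n b)"

lemma rot_refl: "rot a a"
  unfolding rot_def by (metis rotate0 id_apply)

lemma rot_trans: "rot a b \<Longrightarrow> rot b c \<Longrightarrow> rot a c"
  unfolding rot_def by (metis rotate_rotate)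

lemma rot_sym: "rot a b \<Longrightarrow> rot b a"
proof -
  assume "rot a b"
  then obtain n where a: "a = rotate n b" unfolding rot_def by blast
  show "rot b a"
  proof (cases "length b = 0")
    case True
    then show ?thesis using a by (simp add: rot_refl)
  next
    case False
    define m where "m = n mod length b"
    have m: "m < length b" using False m_def by simp
    have "a = rotate m b" using a m_def rotate_conv_mod by metis
    then have "rotate (length b - m) a = rotate (length b) b" using m by (simp add: rotate_rotate)
    also have "\<dots> = b" by simp
    finally show ?thesis unfolding rot_def by metis
  qed
qed

lemma rot_rotate1: "rot (rotate1 a) a"
  unfolding rot_def by (metis One_nat_def rotate_Suc rotate0 id_apply)

lemma cyc_rot_step:
  assumes r: "red n"
  shows "rot (cyc (nf (n @ [a]))) (cyc (step a n))"
proof (cases "a = Eps")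
  case False
  have "red (n @ [a])" using r False by (simp add: red_append)
  then have "nf (n @ [a]) = n @ [a]" by (rule red_nf_id)
  moreover have "cyc (n @ [a]) = n @ [a]" using False by (simp add: cyc_def)
  moreover have "step a n = a # n" using False by (simp add: step_def)
  moreover have "cyc (a # n) = a # n" using False by (simp add: cyc_def)
  ultimately show ?thesis using rot_rotate1[of "a # n"] by simp
next
  case aE: True
  show ?thesis
  proof (cases n)
    case Nil
    then show ?thesis using aE by (simp add: step_def rot_refl)
  next
    case (Cons h t)
    show ?thesis
    proof (cases "h = Eps")
      case hE: True
      show ?thesis
      proof (cases "t = []")
        case True
        then show ?thesis using aE hE Cons nf_EE[of "[]" "[]"] by (simp add: step_def rot_refl cyc_def)
      next
        case tne: False
        show ?thesis
        proof (cases "last t = Eps")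
          case True
          then obtain t' where t': "t = t' @ [Eps]" using tne by (metis append_butlast_last_id)
          have "t' \<noteq> []" using r Cons hE t' by auto
          have rt: "red (t' @ [Eps])" using r Cons t' by (simp add: red_Cons)
          have h1: "hd t' \<noteq> Eps" using r Cons hE t' \<open>t' \<noteq> []\<close> by (simp add: red_Cons)
          have l1: "last t' \<noteq> Eps" using rt \<open>t' \<noteq> []\<close> by (simp add: red_append)
          have rt': "red t'" using rt by (simp add: red_append)
          have "nf (n @ [a]) = nf ((Eps # t') @ Eps # Eps # [])" using Cons hE t' aE by simp
          also have "\<dots> = Eps # t'" using nf_EE[of "Eps # t'" "[]"] red_nf_id[of "Eps # t'"] rt' h1 \<open>t' \<noteq> []\<close>
            by (simp add: red_Cons)
          finally have A: "cyc (nf (n @ [a])) = Eps # t'" using l1 \<open>t' \<noteq> []\<close> by (simp add: cyc_def)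
          have B: "cyc (step a n) = t' @ [Eps]" using Cons hE aE t' h1 \<open>t' \<noteq> []\<close>
            by (simp add: step_def cyc_def)
          have "rotate (length t') (t' @ [Eps]) = Eps # t'" using rotate_append[of t' "[Eps]"] by simp
          then show ?thesis using A B unfolding rot_def by metis
        next
          case False
          have "red (n @ [a])" using r False Cons tne aE red_append[of n "[a]"] by simp
          then have "nf (n @ [a]) = n @ [a]" by (rule red_nf_id)
          then have A: "cyc (nf (n @ [a])) = t" using Cons hE aE tne False by (simp add: cyc_def)
          have h1: "hd t \<noteq> Eps" using r Cons hE tne by (simp add: red_Cons)
          have B: "cyc (step a n) = t" using Cons hE aE h1 tne by (simp add: step_def cyc_def)
          show ?thesis using A B rot_refl by simp
        qed
      qed
    next
      case hN: False
      have sn: "step a n = Eps # n" using Cons hN aE by (simp add: step_def)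
      show ?thesis
      proof (cases "last n = Eps")
        case True
        then obtain n' where n': "n = n' @ [Eps]" using Cons by (metis append_butlast_last_id list.distinct(1))
        have "n' \<noteq> []" using n' Cons hN by auto
        have hn': "hd n' \<noteq> Eps" using n' Cons hN \<open>n' \<noteq> []\<close> by (cases n') auto
        have rn': "red n'" using r n' by (simp add: red_append)
        have "nf (n @ [a]) = nf (n' @ Eps # Eps # [])" using n' aE by simp
        also have "\<dots> = n'" using nf_EE[of n' "[]"] red_nf_id rn' by simp
        finally have A: "cyc (nf (n @ [a])) = n'" using hn' by (simp add: cyc_def)
        have B: "cyc (step a n) = n'" using sn n' by (simp add: cyc_def)
        show ?thesis using A B rot_refl by simp
      next
        case False
        have "red (n @ [a])" using r False Cons aE red_append[of n "[a]"] by simp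
        then have "nf (n @ [a]) = n @ [a]" by (rule red_nf_id)
        then have A: "cyc (nf (n @ [a])) = n @ [Eps]" using Cons hN aE by (simp add: cyc_def)
        have B: "cyc (step a n) = Eps # n" using sn False Cons by (simp add: cyc_def)
        show ?thesis using A B rot_rotate1[of "Eps # n"] by simp
      qed
    qed
  qed
qed

lemma cnf_rotate1: "rot (cnf (rotate1 w)) (cnf w)"
proof (cases w)
  case Nil
  then show ?thesis by (simp add: rot_refl)
next
  case (Cons a xs)
  have "cnf (rotate1 w) = cyc (nf (nf xs @ [a]))" using Cons nf_app_left[of xs "[a]"] by (simp add: cnf_def)
  moreover have "cnf w = cyc (step a (nf xs))" using Cons by (simp add: cnf_def)
  ultimately show ?thesis using cyc_rot_step[OF red_nf] by simp
qed

lemma cnf_rotate: "rot (cnf (rotate n w)) (cnf w)"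
  by (induction n) (auto simp: rot_refl intro: rot_trans[OF cnf_rotate1])

lemma tl_rev': "tl (rev xs) = rev (butlast xs)"
  by (metis butlast_rev rev_rev_ident)

lemma cnf_rev: "cnf (rev w) = rev (cnf w)"
  by (auto simp: tl_rev' butlast_tl simp: cnf_def nf_rev cyc_def hd_rev last_rev butlast_rev)

lemma cnf_del_step: "del_step u v \<Longrightarrow> rot (cnf v) (cnf u)"
proof -
  assume "del_step u v"
  then consider xs ys where "u = xs @ [Eps, Eps] @ ys" "v = xs @ ys"
    | xs where "u = Eps # xs @ [Eps]" "v = xs"
    unfolding del_step_def by blast
  then show ?thesis
  proof cases
    case 1
    then show ?thesis using nf_EE by (simp add: cnf_def rot_refl)
  next
    case 2
    have "cnf v = cnf (xs @ [Eps, Eps])" using 2 nf_EE[of xs "[]"] by (simp add: cnf_def)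
    also have "xs @ [Eps, Eps] = rotate1 u" using 2 by simp
    finally show ?thesis using cnf_rotate1 by simp
  qed
qed


lemma cnf_rtrancl: "del_step\<^sup>*\<^sup>* u v \<Longrightarrow> rot (cnf v) (cnf u)"
  by (induction rule: rtranclp_induct) (auto intro: rot_refl rot_trans cnf_del_step)

lemma not_red_split: "\<not> red p \<Longrightarrow> \<exists>xs ys. p = xs @ Eps # Eps # ys"
proof (induction p rule: red.induct)
  case (3 x y r)
  then show ?case
  proof (cases "x = Eps \<and> y = Eps")
    case True
    then show ?thesis by (metis append_Nil)
  next
    case False
    then obtain xs ys where "y # r = xs @ Eps # Eps # ys" using 3 by auto
    then show ?thesis by (metis append_Cons)
  qed
qed auto

lemma irred_cnf: "\<not> (\<exists>q. del_step p q) \<Longrightarrow> cnf p = p"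
proof -
  assume nq: "\<not> (\<exists>q. del_step p q)"
  have "red p"
  proof (rule ccontr)
    assume "\<not> red p"
    then obtain xs ys where "p = xs @ Eps # Eps # ys" using not_red_split by blast
    then have "del_step p (xs @ ys)" unfolding del_step_def by auto
    then show False using nq by blast
  qed
  then have "nf p = p" by (rule red_nf_id)
  moreover have "cyc p = p"
  proof (rule ccontr)
    assume "cyc p \<noteq> p"
    then have c: "2 \<le> length p" "hd p = Eps" "last p = Eps" unfolding cyc_def by (auto split: if_splits)
    then obtain h t where p: "p = h # t" by (cases p) auto
    then have "t \<noteq> []" using c by auto
    then have "t = butlast t @ [last t]" by simp
    then have "p = Eps # butlast (tl p) @ [Eps]" using c p \<open>t \<noteq> []\<close> by (metis last_ConsR list.sel(1,3))
    then have "del_step p (butlast (tl p))" unfolding del_step_def by blast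
    then show False using nq by blast
  qed
  ultimately show ?thesis by (simp add: cnf_def)
qed

lemma del_step_length: "del_step u v \<Longrightarrow> length v < length u"
  unfolding del_step_def by auto

lemma pattern_exists: "\<exists>p. is_pattern w p"
proof (induction "length w" arbitrary: w rule: less_induct)
  case less
  show ?case
  proof (cases "\<exists>q. del_step w q")
    case True
    then obtain q where q: "del_step w q" by blast
    then obtain p where "is_pattern q p" using less del_step_length by blast
    then have "is_pattern w p" using q unfolding is_pattern_def
      by (meson converse_rtranclp_into_rtranclp)
    then show ?thesis by blast
  next
    case False
    then have "is_pattern w w" unfolding is_pattern_def by auto
    then show ?thesis by blast
  qed
qed

lemma pattern_rot: "is_pattern w p \<Longrightarrow> rot p (cnf w)"
  unfolding is_pattern_def using cnf_rtrancl irred_cnf by metis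

lemma rev_rotate_ex: "\<exists>m. rev (rotate n w) = rotate m (rev w)"
proof (cases "length w = 0")
  case True
  then show ?thesis by simp
next
  case False
  define L where "L = length w"
  have L: "L > 0" using False L_def by simp
  show ?thesis
  proof (cases "n mod L = 0")
    case True
    have "rotate n w = w" using True L_def by simp
    moreover have "rotate 0 (rev w) = rev w" by simp
    ultimately show ?thesis by metis
  next
    case False
    define m where "m = L - n mod L"
    have m: "m < L" "m mod L = m" "L - m = n mod L" using False L m_def by auto
    have "rotate m (rev w) = rev (rotate (L - m mod L) w)" using rotate_rev L_def by metis
    also have "\<dots> = rev (rotate n w)" using m rotate_conv_mod[of n w] L_def by simp
    finally show ?thesis by metis
  qed
qed

lemma sim_alt: "sim v w \<longleftrightarrow> (\<exists>n. v = rotate n w \<or> v = rotate n (rev w))"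
proof
  assume "sim v w"
  then obtain n where "v = rotate n w \<or> v = rev (rotate n w)" unfolding sim_def by blast
  then show "\<exists>n. v = rotate n w \<or> v = rotate n (rev w)" using rev_rotate_ex by metis
next
  assume "\<exists>n. v = rotate n w \<or> v = rotate n (rev w)"
  then obtain n where "v = rotate n w \<or> v = rotate n (rev w)" by blast
  moreover have "\<exists>m. rotate n (rev w) = rev (rotate m w)" using rotate_rev by metis
  ultimately show "sim v w" unfolding sim_def by metis
qed

lemma sim_refl: "sim a a"
  unfolding sim_def by (metis rotate0 id_apply)

lemma rot_sim: "rot a b \<Longrightarrow> sim a b"
  unfolding rot_def sim_def by blast

lemma sim_rev: "sim (rev a) a"
  unfolding sim_alt by (metis rotate0 id_apply)

lemma simI1: "v = rotate n w \<Longrightarrow> sim v w"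
  unfolding sim_alt by blast

lemma simI2: "v = rotate n (rev w) \<Longrightarrow> sim v w"
  unfolding sim_alt by blast

lemma sim_trans: "sim a b \<Longrightarrow> sim b c \<Longrightarrow> sim a c"
proof -
  assume ab: "sim a b" and bc: "sim b c"
  obtain n where n: "a = rotate n b \<or> a = rotate n (rev b)" using ab sim_alt by blast
  obtain m where m: "b = rotate m c \<or> b = rotate m (rev c)" using bc sim_alt by blast
  show "sim a c"
  proof (cases "a = rotate n b")
    case True
    show ?thesis
    proof (cases "b = rotate m c")
      case True
      then have "a = rotate (n + m) c" using \<open>a = rotate n b\<close> by (simp add: rotate_rotate)
      then show ?thesis by (rule simI1)
    next
      case False
      then have "b = rotate m (rev c)" using m by blast
      then have "a = rotate (n + m) (rev c)" using \<open>a = rotate n b\<close> by (simp add: rotate_rotate)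
      then show ?thesis by (rule simI2)
    qed
  next
    case False
    then have a: "a = rotate n (rev b)" using n by blast
    show ?thesis
    proof (cases "b = rotate m c")
      case True
      obtain k where k: "rev (rotate m c) = rotate k (rev c)" using rev_rotate_ex by blast
      have "a = rotate (n + k) (rev c)" using a True k by (simp add: rotate_rotate)
      then show ?thesis by (rule simI2)
    next
      case False
      then have b: "b = rotate m (rev c)" using m by blast
      obtain k where k: "rev (rotate m (rev c)) = rotate k (rev (rev c))" using rev_rotate_ex by blast
      have "a = rotate (n + k) c" using a b k by (simp add: rotate_rotate)
      then show ?thesis by (rule simI1)
    qed
  qed
qed

lemma sim_sym: "sim a b \<Longrightarrow> sim b a"
proof -
  assume "sim a b"
  then obtain n where "a = rotate n b \<or> a = rev (rotate n b)" unfolding sim_def by blast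
  then show "sim b a"
  proof
    assume "a = rotate n b"
    then have "rot b a" using rot_sym rot_def by blast
    then show ?thesis by (rule rot_sim)
  next
    assume a: "a = rev (rotate n b)"
    have "rot b (rotate n b)" using rot_sym rot_def by blast
    then have "sim b (rotate n b)" by (rule rot_sim)
    moreover have "sim (rotate n b) a" unfolding a sim_def
      by (rule exI[of _ 0]) simp
    ultimately show ?thesis by (rule sim_trans)
  qed
qed

lemma cnf_sim: "sim u v \<Longrightarrow> sim (cnf u) (cnf v)"
proof -
  assume "sim u v"
  then obtain n where "u = rotate n v \<or> u = rev (rotate n v)" unfolding sim_def by blast
  then show ?thesis
  proof
    assume "u = rotate n v"
    then show ?thesis using cnf_rotate rot_sim by blast
  next
    assume u: "u = rev (rotate n v)"
    have "cnf u = rev (cnf (rotate n v))" using u cnf_rev by simp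
    then have "sim (cnf u) (cnf (rotate n v))" using sim_rev by simp
    moreover have "sim (cnf (rotate n v)) (cnf v)" using cnf_rotate rot_sim by blast
    ultimately show ?thesis by (rule sim_trans)
  qed
qed

lemma approx_iff: "approx u v \<longleftrightarrow> sim (cnf u) (cnf v)"
proof
  assume "approx u v"
  then obtain pu pv where p: "is_pattern u pu" "is_pattern v pv" "sim pu pv"
    unfolding approx_def by blast
  have "sim pu (cnf u)" "sim pv (cnf v)" using p pattern_rot rot_sim by blast+
  then show "sim (cnf u) (cnf v)" using p(3) by (meson sim_sym sim_trans)
next
  assume s: "sim (cnf u) (cnf v)"
  obtain pu pv where p: "is_pattern u pu" "is_pattern v pv" using pattern_exists by blast
  have "sim pu (cnf u)" "sim pv (cnf v)" using p pattern_rot rot_sim by blast+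
  then have "sim pu pv" using s by (meson sim_sym sim_trans)
  then show "approx u v" using p unfolding approx_def by blast
qed

lemma approx_refl: "approx u u"
  using approx_iff sim_refl by blast

lemma approx_sym: "approx u v \<Longrightarrow> approx v u"
  using approx_iff sim_sym by blast

lemma approx_trans: "approx u v \<Longrightarrow> approx v z \<Longrightarrow> approx u z"
  using approx_iff sim_trans by blast

lemma cls_eq: "approx u v \<Longrightarrow> cls u = cls v"
  unfolding cls_def using approx_sym approx_trans by blast



lemma del_step_map: "f Eps = Eps \<Longrightarrow> del_step u v \<Longrightarrow> del_step (map f u) (map f v)"
  unfolding del_step_def by (auto; metis map_append list.map)

lemma rtrancl_map: assumes f: "f Eps = Eps" shows "del_step\<^sup>*\<^sup>* u v \<Longrightarrow> del_step\<^sup>*\<^sup>* (map f u) (map f v)"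
  by (induction rule: rtranclp_induct) (auto intro: rtranclp.rtrancl_into_rtrancl del_step_map[of f, OF f])

lemma sim_map: "sim u v \<Longrightarrow> sim (map f u) (map f v)"
  unfolding sim_def by (auto simp: rotate_map rev_map[symmetric])

lemma approx_map:
  assumes f: "f Eps = Eps" and a: "approx u v"
  shows "approx (map f u) (map f v)"
proof -
  obtain pu pv where p: "is_pattern u pu" "is_pattern v pv" "sim pu pv"
    using a unfolding approx_def by blast
  have "rot (cnf (map f pu)) (cnf (map f u))"
    using p(1) rtrancl_map[of f, OF f] cnf_rtrancl unfolding is_pattern_def by blast
  moreover have "rot (cnf (map f pv)) (cnf (map f v))"
    using p(2) rtrancl_map[of f, OF f] cnf_rtrancl unfolding is_pattern_def by blast
  moreover have "sim (cnf (map f pu)) (cnf (map f pv))"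
    using p(3) sim_map cnf_sim by blast
  ultimately have "sim (cnf (map f u)) (cnf (map f v))"
    by (meson rot_sim sim_sym sim_trans)
  then show ?thesis using approx_iff by blast
qed

lemma count_step: "x \<noteq> Eps \<Longrightarrow> count_list (step z r) x = count_list (z # r) x"
  unfolding step_def by (cases r) auto

lemma count_nf: "x \<noteq> Eps \<Longrightarrow> count_list (nf u) x = count_list u x"
  by (induction u) (auto simp: count_step)

lemma cyc_cases: "cyc r = r \<or> r = Eps # cyc r @ [Eps]"
proof (cases "cyc r = r")
  case False
  then have c: "2 \<le> length r" "hd r = Eps" "last r = Eps" unfolding cyc_def by (auto split: if_splits)
  then obtain h t where p: "r = h # t" by (cases r) auto
  then have "t \<noteq> []" using c by auto
  then have "t = butlast t @ [last t]" by simp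
  then have "r = Eps # butlast (tl r) @ [Eps]" using c p \<open>t \<noteq> []\<close> by (metis last_ConsR list.sel(1,3))
  then show ?thesis using c by (simp add: cyc_def)
qed simp

lemma count_cyc: "x \<noteq> Eps \<Longrightarrow> count_list (cyc r) x = count_list r x"
  using cyc_cases[of r] by (metis count_list.simps(2) count_list_append count_list.simps(1) add_0 add.commute)

lemma count_cnf: "x \<noteq> Eps \<Longrightarrow> count_list (cnf u) x = count_list u x"
  by (simp add: cnf_def count_cyc count_nf)

lemma count_rotate1: "count_list (rotate1 w) x = count_list w x"
  by (cases w) auto

lemma count_rotate: "count_list (rotate n w) x = count_list w x"
  by (induction n) (auto simp: count_rotate1)

lemma count_sim: "sim u v \<Longrightarrow> count_list u x = count_list v x"
  unfolding sim_def by (auto simp: count_rotate)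

lemma count_approx: "approx u v \<Longrightarrow> x \<noteq> Eps \<Longrightarrow> count_list u x = count_list v x"
  using approx_iff count_sim count_cnf by metis

lemma proper_letters_count: "proper_letters u = {c. proper c \<and> count_list u c > 0}"
proof -
  have "\<And>c. c \<in> set u \<longleftrightarrow> count_list u c > 0" using count_list_0_iff[of u] by (metis gr0I less_irrefl)
  then show ?thesis unfolding proper_letters_def by blast
qed

lemma proper_letters_approx: "approx u v \<Longrightarrow> proper_letters u = proper_letters v"
  unfolding proper_letters_count using count_approx proper_def by fastforce

lemma proper_letters_cls: "proper_letters_cls (cls w) = proper_letters w"
  unfolding proper_letters_cls_def cls_def using proper_letters_approx approx_refl by blast

lemma map_join_eps: "f Eps = Eps \<Longrightarrow> map f (join_eps bss) = join_eps (map (map f) bss)"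
  by (induction bss rule: join_eps.induct) auto

lemma count_join_eps: "x \<noteq> Eps \<Longrightarrow> count_list (join_eps bss) x = sum_list (map (\<lambda>b. count_list b x) bss)"
  by (induction bss rule: join_eps.induct) auto

lemma set_join_eps: "set (join_eps bss) \<subseteq> insert Eps (\<Union> (set ` set bss))"
  by (induction bss rule: join_eps.induct) auto

lemma set_join_eps2: "b \<in> set bss \<Longrightarrow> set b \<subseteq> set (join_eps bss)"
  by (induction bss rule: join_eps.induct) auto

lemma join_eps_Cons: "join_eps (b # bss) = b @ (if bss = [] then [] else Eps # join_eps bss)"
  by (cases bss) auto

lemma nf_rep_even: "even n \<Longrightarrow> nf (replicate n Eps @ u) = nf u"
proof -
  assume "even n"
  then obtain k where "n = 2 * k" by blast
  then show ?thesis
  proof (induction k arbitrary: n)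
    case (Suc k)
    have "replicate n Eps @ u = [] @ Eps # Eps # (replicate (2 * k) Eps @ u)"
      using Suc by (simp add: numeral_2_eq_2)
    then show ?case using nf_EE[of "[]"] Suc by simp
  qed simp
qed

lemma nf_rep_odd: "odd n \<Longrightarrow> nf (replicate n Eps @ u) = nf (Eps # u)"
proof -
  assume "odd n"
  then obtain m where m: "n = Suc m" "even m" by (cases n) auto
  have "nf (replicate n Eps @ u) = step Eps (nf (replicate m Eps @ u))" using m by simp
  also have "\<dots> = nf (Eps # u)" using nf_rep_even[OF m(2)] by simp
  finally show ?thesis .
qed

lemma nf_cong_right: "nf b = nf b' \<Longrightarrow> nf (a @ b) = nf (a @ b')"
  by (metis nf_app_right)

lemma nf_cong_Cons: "nf b = nf b' \<Longrightarrow> nf (z # b) = nf (z # b')"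
  by simp


definition Jw :: "(letter \<times> nat) list \<Rightarrow> word" where
  "Jw cs = join_eps (map (\<lambda>(x, l). replicate l x) cs)"

lemma blocks_word_Jw: "blocks_word cs = Sig # Jw cs"
  by (simp add: blocks_word_def Jw_def)

lemma Jw_Cons: "Jw ((x, l) # cs) = replicate l x @ (if cs = [] then [] else Eps # Jw cs)"
  by (simp add: Jw_def join_eps_Cons)

lemma blocks_ok_Cons:
  "blocks_ok ((x, l) # cs) \<longleftrightarrow> proper x \<and> 0 < l \<and> (cs = [] \<or> (blocks_ok cs \<and> x \<noteq> fst (cs ! 0)))"
proof -
  have "(\<forall>h. Suc h < length ((x, l) # cs) \<longrightarrow> fst (((x, l) # cs) ! h) \<noteq> fst (((x, l) # cs) ! Suc h))
     \<longleftrightarrow> (cs \<noteq> [] \<longrightarrow> x \<noteq> fst (cs ! 0)) \<and> (\<forall>h. Suc h < length cs \<longrightarrow> fst (cs ! h) \<noteq> fst (cs ! Suc h))"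
    (is "?L \<longleftrightarrow> ?R")
  proof
    assume L: ?L
    have "cs \<noteq> [] \<longrightarrow> x \<noteq> fst (cs ! 0)" using L[rule_format, of 0] by auto
    moreover have "\<forall>h. Suc h < length cs \<longrightarrow> fst (cs ! h) \<noteq> fst (cs ! Suc h)"
      using L by (metis Suc_less_eq length_Cons nth_Cons_Suc)
    ultimately show ?R by blast
  next
    assume R: ?R
    show ?L
    proof (intro allI impI)
      fix h assume h: "Suc h < length ((x, l) # cs)"
      show "fst (((x, l) # cs) ! h) \<noteq> fst (((x, l) # cs) ! Suc h)"
      proof (cases h)
        case 0
        then show ?thesis using R h by auto
      next
        case (Suc k)
        then show ?thesis using R h by auto
      qed
    qed
  qed
  then show ?thesis unfolding blocks_ok_def by auto
qed

lemma nf_rep_proper: "x \<noteq> Eps \<Longrightarrow> nf (replicate l x @ u) = replicate l x @ nf u"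
  by (induction l) (auto simp: step_def)

lemma nf_Jw: "blocks_ok cs \<Longrightarrow> nf (Jw cs) = Jw cs \<and> Jw cs \<noteq> [] \<and> hd (Jw cs) = fst (cs ! 0)"
proof (induction cs)
  case Nil
  then show ?case by (simp add: blocks_ok_def)
next
  case (Cons c cs)
  obtain x l where c: "c = (x, l)" by (cases c)
  have px: "proper x" "0 < l" using Cons c blocks_ok_Cons by auto
  then have xE: "x \<noteq> Eps" by (simp add: proper_def)
  show ?case
  proof (cases "cs = []")
    case True
    then show ?thesis using c px xE nf_rep_proper[of x l "[]"] by (simp add: Jw_Cons)
  next
    case False
    then have ok: "blocks_ok cs" using Cons c blocks_ok_Cons by auto
    then have IH: "nf (Jw cs) = Jw cs" "Jw cs \<noteq> []" "hd (Jw cs) = fst (cs ! 0)" using Cons by auto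
    have "proper (fst (cs ! 0))" using ok False unfolding blocks_ok_def
      by (metis (mono_tags, lifting) case_prod_beta nth_mem length_greater_0_conv)
    then have "hd (Jw cs) \<noteq> Eps" using IH by (simp add: proper_def)
    then have "nf (Eps # Jw cs) = Eps # Jw cs" using IH by (simp add: step_def)
    then show ?thesis using c px xE nf_rep_proper[of x l] False by (simp add: Jw_Cons)
  qed
qed


definition gy :: "letter \<Rightarrow> letter \<times> nat \<Rightarrow> word" where
  "gy y c = replicate (snd c) (if fst c = y then Eps else fst c)"

definition Ty :: "(letter \<times> nat) list \<Rightarrow> letter \<Rightarrow> nat \<Rightarrow> word" where
  "Ty bs y k = join_eps (map (gy y) (drop k bs))"

lemma Ty_unfold: "k < length bs \<Longrightarrow>
  Ty bs y k = gy y (bs ! k) @ (if Suc k < length bs then Eps # Ty bs y (Suc k) else [])"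
proof -
  assume k: "k < length bs"
  have "drop k bs = bs ! k # drop (Suc k) bs" using k by (simp add: Cons_nth_drop_Suc)
  moreover have "drop (Suc k) bs = [] \<longleftrightarrow> \<not> Suc k < length bs" by auto
  ultimately show ?thesis unfolding Ty_def by (simp add: join_eps_Cons)
qed

lemma blocks_okD:
  assumes "blocks_ok bs" "k < length bs"
  shows "proper (fst (bs ! k))" "0 < snd (bs ! k)"
    "Suc k < length bs \<Longrightarrow> fst (bs ! k) \<noteq> fst (bs ! Suc k)"
proof -
  have m: "bs ! k \<in> set bs" using assms(2) by simp
  have b: "\<forall>(x, l)\<in>set bs. proper x \<and> 0 < l" using assms(1) unfolding blocks_ok_def by blast
  have "proper (fst (bs ! k)) \<and> 0 < snd (bs ! k)" using b m by (cases "bs ! k") auto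
  then show "proper (fst (bs ! k))" "0 < snd (bs ! k)" by auto
  show "Suc k < length bs \<Longrightarrow> fst (bs ! k) \<noteq> fst (bs ! Suc k)" using assms(1) unfolding blocks_ok_def by blast
qed

lemma core:
  assumes ok: "blocks_ok bs"
    and lastodd: "odd (snd (bs ! (length bs - 1)))"
    and mid: "\<forall>h. 1 \<le> h \<and> h < length bs - 1 \<longrightarrow>
               (odd (snd (bs ! h)) \<longleftrightarrow> fst (bs ! (h - 1)) \<noteq> fst (bs ! (h + 1)))"
  shows "k < length bs \<Longrightarrow> fst (bs ! k) \<noteq> y \<Longrightarrow>
    \<exists>cs. blocks_ok cs \<and> fst (cs ! 0) = fst (bs ! k) \<and>
      (\<forall>c\<in>set cs. fst c \<noteq> y \<and> fst c \<in> fst ` set bs) \<and> nf (Ty bs y k) = nf (Jw cs)"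
proof (induction "length bs - k" arbitrary: k rule: less_induct)
  case less
  define x where "x = fst (bs ! k)"
  define l where "l = snd (bs ! k)"
  have px: "proper x" "0 < l" using blocks_okD[OF ok less.prems(1)] x_def l_def by auto
  have xE: "x \<noteq> Eps" using px by (simp add: proper_def)
  have xy: "x \<noteq> y" using less.prems x_def by simp
  have xin: "x \<in> fst ` set bs" using less.prems(1) x_def by auto
  have gk: "gy y (bs ! k) = replicate l x" using xy x_def l_def by (simp add: gy_def)
  show ?case
  proof (cases "Suc k < length bs")
    case False
    have "Ty bs y k = replicate l x" using Ty_unfold[OF less.prems(1)] False gk by simp
    moreover have "Jw [(x, l)] = replicate l x" by (simp add: Jw_def)
    moreover have "blocks_ok [(x, l)]" using px by (simp add: blocks_ok_Cons)
    ultimately show ?thesis using xy xin x_def by (intro exI[of _ "[(x, l)]"]) auto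
  next
    case sk: True
    define x1 where "x1 = fst (bs ! Suc k)"
    define l1 where "l1 = snd (bs ! Suc k)"
    have x1x: "x1 \<noteq> x" using blocks_okD(3)[OF ok less.prems(1) sk] x_def x1_def by simp
    have T: "Ty bs y k = replicate l x @ Eps # Ty bs y (Suc k)"
      using Ty_unfold[OF less.prems(1)] sk gk by simp
    show ?thesis
    proof (cases "x1 = y")
      case False
      obtain cs where cs: "blocks_ok cs" "fst (cs ! 0) = x1"
        "\<forall>c\<in>set cs. fst c \<noteq> y \<and> fst c \<in> fst ` set bs" "nf (Ty bs y (Suc k)) = nf (Jw cs)"
        using less.hyps[of "Suc k"] less.prems sk False x1_def by (metis diff_less_mono2 lessI)
      have csne: "cs \<noteq> []" using cs(1) by (simp add: blocks_ok_def)
      have "nf (Ty bs y k) = nf (replicate l x @ Eps # Jw cs)"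
        using T cs(4) nf_cong_right nf_cong_Cons by metis
      also have "replicate l x @ Eps # Jw cs = Jw ((x, l) # cs)" using csne by (simp add: Jw_Cons)
      finally have "nf (Ty bs y k) = nf (Jw ((x, l) # cs))" .
      moreover have "blocks_ok ((x, l) # cs)" using px cs x1x csne by (simp add: blocks_ok_Cons)
      ultimately show ?thesis using cs xy xin x_def by (intro exI[of _ "(x, l) # cs"]) auto
    next
      case x1y: True
      have g1: "gy y (bs ! Suc k) = replicate l1 Eps" using x1y x1_def l1_def by (simp add: gy_def)
      show ?thesis
      proof (cases "Suc (Suc k) < length bs")
        case False
        then have last: "Suc k = length bs - 1" using sk by simp
        have "odd l1" using lastodd last l1_def by simp
        have "Ty bs y (Suc k) = replicate l1 Eps" using Ty_unfold[OF sk] False g1 by simp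
        then have "Ty bs y k = replicate l x @ replicate (Suc l1) Eps @ []" using T by simp
        then have "nf (Ty bs y k) = nf (replicate l x @ [])"
          using nf_cong_right[OF nf_rep_even[of "Suc l1" "[]"], of "replicate l x"] \<open>odd l1\<close> by simp
        moreover have "Jw [(x, l)] = replicate l x" by (simp add: Jw_def)
        moreover have "blocks_ok [(x, l)]" using px by (simp add: blocks_ok_Cons)
        ultimately show ?thesis using xy xin x_def by (intro exI[of _ "[(x, l)]"]) auto
      next
        case ssk: True
        define x2 where "x2 = fst (bs ! Suc (Suc k))"
        have x2y: "x2 \<noteq> y" using blocks_okD(3)[OF ok sk ssk] x1y x1_def x2_def by simp
        have midk: "odd l1 \<longleftrightarrow> x \<noteq> x2"
          using mid[rule_format, of "Suc k"] ssk x_def x2_def l1_def by auto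
        obtain cs where cs: "blocks_ok cs" "fst (cs ! 0) = x2"
          "\<forall>c\<in>set cs. fst c \<noteq> y \<and> fst c \<in> fst ` set bs" "nf (Ty bs y (Suc (Suc k))) = nf (Jw cs)"
          using less.hyps[of "Suc (Suc k)"] less.prems ssk x2y x2_def by (metis diff_less_mono2 less_SucI lessI)
        have csne: "cs \<noteq> []" using cs(1) by (simp add: blocks_ok_def)
        have "Ty bs y (Suc k) = replicate l1 Eps @ Eps # Ty bs y (Suc (Suc k))"
          using Ty_unfold[OF sk] ssk g1 by simp
        then have T2: "Ty bs y k = replicate l x @ replicate (Suc (Suc l1)) Eps @ Ty bs y (Suc (Suc k))"
          using T by (simp add: replicate_app_Cons_same)
        show ?thesis
        proof (cases "odd l1")
          case True
          have "nf (Ty bs y k) = nf (replicate l x @ Eps # Ty bs y (Suc (Suc k)))"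
            using T2 nf_cong_right[OF nf_rep_odd[of "Suc (Suc l1)" "Ty bs y (Suc (Suc k))"]] True by simp
          also have "\<dots> = nf (replicate l x @ Eps # Jw cs)"
            using cs(4) nf_cong_right nf_cong_Cons by metis
          also have "replicate l x @ Eps # Jw cs = Jw ((x, l) # cs)" using csne by (simp add: Jw_Cons)
          finally have "nf (Ty bs y k) = nf (Jw ((x, l) # cs))" .
          moreover have "blocks_ok ((x, l) # cs)" using px cs csne midk True by (simp add: blocks_ok_Cons)
          ultimately show ?thesis using cs xy xin x_def by (intro exI[of _ "(x, l) # cs"]) auto
        next
          case False
          then have xx2: "x2 = x" using midk by simp
          obtain c rest where "cs = c # rest" using csne by (cases cs) auto
          moreover obtain m where "c = (x, m)" using cs(2) xx2 \<open>cs = c # rest\<close> by (cases c) auto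
          ultimately have cs0: "cs = (x, m) # rest" by simp
          have "nf (Ty bs y k) = nf (replicate l x @ Ty bs y (Suc (Suc k)))"
            using T2 nf_cong_right[OF nf_rep_even[of "Suc (Suc l1)" "Ty bs y (Suc (Suc k))"]] False by simp
          also have "\<dots> = nf (replicate l x @ Jw cs)"
            using cs(4) nf_cong_right by metis
          also have "replicate l x @ Jw cs = Jw ((x, l + m) # rest)"
            using cs0 by (simp add: Jw_Cons replicate_add)
          finally have "nf (Ty bs y k) = nf (Jw ((x, l + m) # rest))" .
          moreover have "blocks_ok ((x, l + m) # rest)" using cs(1) cs0 by (simp add: blocks_ok_Cons)
          moreover have "\<forall>c\<in>set ((x, l + m) # rest). fst c \<noteq> y \<and> fst c \<in> fst ` set bs"
            using cs(3) cs0 xy xin by auto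
          ultimately show ?thesis using x_def by (intro exI[of _ "(x, l + m) # rest"]) auto
        qed
      qed
    qed
  qed
qed



lemma set_Jw: "set (Jw bs) \<subseteq> insert Eps (fst ` set bs)"
proof -
  have "set (Jw bs) \<subseteq> insert Eps (\<Union> (set ` set (map (\<lambda>(x, l). replicate l x) bs)))"
    unfolding Jw_def by (rule set_join_eps)
  also have "\<dots> \<subseteq> insert Eps (fst ` set bs)" by (auto split: prod.splits) (metis fst_conv image_eqI)
  finally show ?thesis .
qed

lemma set_Jw2: "(x, l) \<in> set bs \<Longrightarrow> 0 < l \<Longrightarrow> x \<in> set (Jw bs)"
proof -
  assume a: "(x, l) \<in> set bs" "0 < l"
  have "replicate l x \<in> set (map (\<lambda>(x, l). replicate l x) bs)" using a by force
  then have "set (replicate l x) \<subseteq> set (Jw bs)" unfolding Jw_def by (rule set_join_eps2)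
  then show ?thesis using a by auto
qed

lemma blocks_proper: "blocks_ok bs \<Longrightarrow> c \<in> set bs \<Longrightarrow> proper (fst c) \<and> 0 < snd c"
  unfolding blocks_ok_def by (cases c) auto

lemma pl_blocks: "blocks_ok bs \<Longrightarrow> proper_letters (blocks_word bs) = fst ` set bs"
proof -
  assume ok: "blocks_ok bs"
  have "proper_letters (blocks_word bs) \<subseteq> fst ` set bs"
    using set_Jw[of bs] unfolding proper_letters_def blocks_word_Jw proper_def by auto
  moreover have "fst ` set bs \<subseteq> proper_letters (blocks_word bs)"
  proof
    fix x assume "x \<in> fst ` set bs"
    then obtain l where xl: "(x, l) \<in> set bs" by force
    then have "proper x" "0 < l" using blocks_proper[OF ok xl] by auto
    then show "x \<in> proper_letters (blocks_word bs)"
      using set_Jw2[OF xl] unfolding proper_letters_def blocks_word_Jw by auto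
  qed
  ultimately show ?thesis by blast
qed

lemma count_rep: "count_list (replicate l z) x = (if z = x then l else 0)"
  by (induction l) auto

lemma count_Jw: "x \<noteq> Eps \<Longrightarrow> count_list (Jw bs) x = sum_list (map (\<lambda>c. if fst c = x then snd c else 0) bs)"
proof -
  assume x: "x \<noteq> Eps"
  have "count_list (Jw bs) x = sum_list (map (\<lambda>b. count_list b x) (map (\<lambda>(x, l). replicate l x) bs))"
    unfolding Jw_def using count_join_eps[OF x] by blast
  also have "\<dots> = sum_list (map (\<lambda>c. if fst c = x then snd c else 0) bs)"
    by (induction bs) (auto simp: count_rep)
  finally show ?thesis .
qed

lemma sum_blocks:
  assumes ok: "blocks_ok bs"
  shows "(\<Sum>h<length bs. if fst (bs ! h) = x then snd (bs ! h) else 0)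
          = (if proper x then count_list (blocks_word bs) x else 0)"
proof -
  have "(\<Sum>h<length bs. if fst (bs ! h) = x then snd (bs ! h) else 0)
      = sum_list (map (\<lambda>c. if fst c = x then snd c else 0) bs)"
    by (simp add: sum_list_sum_nth atLeast0LessThan)
  also have "\<dots> = (if proper x then count_list (blocks_word bs) x else 0)"
  proof (cases "proper x")
    case True
    then have "x \<noteq> Eps" "x \<noteq> Sig" by (auto simp: proper_def)
    then show ?thesis using True count_Jw by (simp add: blocks_word_Jw)
  next
    case False
    have "\<forall>c\<in>set bs. fst c \<noteq> x" using blocks_proper[OF ok] False by blast
    then have "map (\<lambda>c. if fst c = x then snd c else 0) bs = map (\<lambda>c. 0) bs" by auto
    then show ?thesis using False by (simp add: sum_list_replicate)
  qed
  finally show ?thesis .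
qed


lemma count_map_id: "(\<And>c. f c = x \<longleftrightarrow> c = x) \<Longrightarrow> count_list (map f u) x = count_list u x"
  by (induction u) auto

lemma count_map_none: "(\<And>c. f c \<noteq> x) \<Longrightarrow> count_list (map f u) x = 0"
  by (induction u) auto

lemma count_map_two: "(\<And>c. f c = x \<longleftrightarrow> c = x \<or> c = z) \<Longrightarrow> x \<noteq> z \<Longrightarrow>
   count_list (map f u) x = count_list u x + count_list u z"
  by (induction u) auto

lemma cnf_target:
  assumes "a \<noteq> Eps" "nf v = v"
  shows "cnf (a # v) = a # v"
  using assms by (simp add: cnf_def cyc_def step_def)

theorem lemma7:
  fixes W :: "word set" and w :: word and y :: letter
  assumes "s_word W"
    and "W = cls w"
    and "card (proper_letters_cls W) \<ge> 2"
    and "parity_conditions W"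
    and "y \<in> proper_letters_cls W"
  shows "s_word (cls (proj y w))"
proof -
  note sw = assms(1) and Ww = assms(2) and card = assms(3) and par = assms(4) and yin = assms(5)
  have PL: "proper_letters_cls W = proper_letters w" using Ww proper_letters_cls by simp
  have py: "proper y" using yin PL unfolding proper_letters_def by auto
  obtain bs where ok: "blocks_ok bs" and bwW: "blocks_word bs \<in> W"
    and odd0: "odd (snd (bs ! 0))" and oddl: "odd (snd (bs ! (length bs - 1)))"
    and mid: "\<forall>h. 1 \<le> h \<and> h < length bs - 1 \<longrightarrow>
               (odd (snd (bs ! h)) \<longleftrightarrow> fst (bs ! (h - 1)) \<noteq> fst (bs ! (h + 1)))"
    using par unfolding parity_conditions_def Let_def by blast
  define bw where "bw = blocks_word bs"
  have abw: "approx bw w" using bwW Ww bw_def cls_def by simp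
  have PLw: "proper_letters w = fst ` set bs"
    using proper_letters_approx[OF abw] pl_blocks[OF ok] bw_def by simp
  have bsne: "bs \<noteq> []" using ok blocks_ok_def by simp
  have len2: "1 < length bs"
  proof (rule ccontr)
    assume "\<not> 1 < length bs"
    then have "length bs = 1" using bsne by (cases bs) auto
    then obtain c where "bs = [c]" by (cases bs) auto
    then have "card (proper_letters w) = 1" using PLw by simp
    then show False using card PL by simp
  qed
  have evc: "\<And>x. proper x \<Longrightarrow> even (count_list bw x)"
  proof -
    fix x assume px: "proper x"
    from sw show "even (count_list bw x)" unfolding s_word_def
    proof (elim disjE exE conjE)
      fix a lam assume pa: "proper a" and "W = cls (replicate lam a)"
      then have "proper_letters w = proper_letters (replicate lam a)" using PL proper_letters_cls by simp
      also have "\<dots> \<subseteq> {a}" unfolding proper_letters_def by auto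
      finally have "card (proper_letters w) \<le> card {a}" by (intro card_mono) simp_all
      then have "card (proper_letters w) \<le> 1" by simp
      then show ?thesis using card PL by simp
    next
      fix bs0 assume ok0: "blocks_ok bs0"
        and ev0: "\<forall>x. even (\<Sum>h<length bs0. if fst (bs0 ! h) = x then snd (bs0 ! h) else 0)"
        and W0: "W = cls (blocks_word bs0)"
      have "approx bw (blocks_word bs0)" using bwW W0 bw_def cls_def by simp
      then have "count_list bw x = count_list (blocks_word bs0) x"
        using count_approx px proper_def by metis
      then show ?thesis using ev0[rule_format, of x] sum_blocks[OF ok0, of x] px by simp
    qed
  qed
  define f where "f = (if card (proper_letters w) = 2 then
        (let b = (THE b. proper_letters w - {y} = {b}) in
          (\<lambda>c. if c = y then Eps else if c = Sig then b else c))
      else (\<lambda>c. if c = y then Eps else c))"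
  have projf: "proj y w = map f w" unfolding proj_def f_def by (simp add: Let_def)
  have fE: "f Eps = Eps" using py unfolding f_def proper_def by (simp add: Let_def)
  have fprop: "\<And>x. proper x \<Longrightarrow> f x = (if x = y then Eps else x)"
    unfolding f_def proper_def by (simp add: Let_def)
  have am: "approx (map f w) (map f bw)" using approx_map[of f, OF fE approx_sym[OF abw]] .
  have mapJ: "map f (Jw bs) = Ty bs y 0"
  proof -
    have "map f (Jw bs) = join_eps (map (map f) (map (\<lambda>(x, l). replicate l x) bs))"
      unfolding Jw_def using map_join_eps[of f, OF fE] by blast
    also have "map (map f) (map (\<lambda>(x, l). replicate l x) bs) = map (gy y) bs"
      unfolding map_map
    proof (rule map_cong[OF refl])
      fix c assume c: "c \<in> set bs"
      obtain x l where cxl: "c = (x, l)" by (cases c)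
      have "proper x" using blocks_proper[OF ok c] cxl by simp
      then show "(map f \<circ> (\<lambda>(x, l). replicate l x)) c = gy y c"
        using cxl fprop by (simp add: gy_def map_replicate)
    qed
    finally show ?thesis by (simp add: Ty_def)
  qed
  have fS: "f Sig \<noteq> Eps"
  proof -
    show ?thesis
    proof (cases "card (proper_letters w) = 2")
      case True
      obtain b where b: "proper_letters w - {y} = {b}"
        using card_1_singletonE[of "proper_letters w - {y}"] card_Diff_singleton[of y "proper_letters w"] True yin PL by auto
      have "b \<in> proper_letters w" using b by auto
      then have "proper b" unfolding proper_letters_def by simp
      moreover have "(THE b. proper_letters w - {y} = {b}) = b" using b by auto
      ultimately show ?thesis using True py unfolding f_def proper_def by (auto simp: Let_def)
    next
      case False
      then show ?thesis using py unfolding f_def proper_def by auto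
    qed
  qed
  obtain cs where cs: "blocks_ok cs" "\<forall>c\<in>set cs. fst c \<noteq> y \<and> fst c \<in> fst ` set bs"
    "nf (Ty bs y 0) = nf (Jw cs)"
  proof (cases "fst (bs ! 0) = y")
    case False
    then show ?thesis using core[OF ok oddl mid, of 0 y] bsne that by auto
  next
    case True
    have "fst (bs ! 1) \<noteq> y" using blocks_okD(3)[of bs 0] ok len2 True bsne by auto
    then obtain cs where cs: "blocks_ok cs" "\<forall>c\<in>set cs. fst c \<noteq> y \<and> fst c \<in> fst ` set bs"
      "nf (Ty bs y 1) = nf (Jw cs)" using core[OF ok oddl mid, of 1 y] len2 by auto
    have "Ty bs y 0 = replicate (snd (bs ! 0)) Eps @ Eps # Ty bs y 1"
      using Ty_unfold[of 0 bs y] bsne len2 True by (simp add: gy_def)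
    also have "\<dots> = replicate (Suc (snd (bs ! 0))) Eps @ Ty bs y 1" by (simp add: replicate_app_Cons_same)
    finally have "nf (Ty bs y 0) = nf (Ty bs y 1)" using nf_rep_even[of "Suc (snd (bs ! 0))" "Ty bs y 1"] odd0 by (simp del: replicate_Suc)
    then show ?thesis using that cs by simp
  qed
  have nfJ: "nf (Jw cs) = Jw cs" using nf_Jw[OF cs(1)] by simp
  have mbw: "map f bw = f Sig # Ty bs y 0" using mapJ bw_def blocks_word_Jw by simp
  have cnfm: "cnf (map f bw) = f Sig # Jw cs"
  proof -
    have "nf (map f bw) = step (f Sig) (nf (Jw cs))" using mbw cs(3) by simp
    also have "\<dots> = f Sig # Jw cs" using nfJ fS by (simp add: step_def)
    finally show ?thesis using fS nfJ by (simp add: cnf_def cyc_def)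
  qed
  have key: "\<And>t. cnf t = f Sig # Jw cs \<Longrightarrow> cls (proj y w) = cls t"
  proof -
    fix t assume "cnf t = f Sig # Jw cs"
    then have "approx (map f bw) t" using cnfm approx_iff sim_refl by metis
    then have "approx (map f w) t" using am approx_trans by blast
    then show "cls (proj y w) = cls t" using projf cls_eq by simp
  qed
  show ?thesis
  proof (cases "card (proper_letters w) = 2")
    case False
    have fSig: "f Sig = Sig" using False py unfolding f_def proper_def by auto
    have "cnf (blocks_word cs) = f Sig # Jw cs"
      using fSig nfJ cnf_target[of Sig "Jw cs"] blocks_word_Jw by simp
    then have eq: "cls (proj y w) = cls (blocks_word cs)" using key by blast
    have ev: "\<forall>x. even (\<Sum>h<length cs. if fst (cs ! h) = x then snd (cs ! h) else 0)"
    proof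
      fix x
      show "even (\<Sum>h<length cs. if fst (cs ! h) = x then snd (cs ! h) else 0)"
      proof (cases "proper x")
        case px: True
        have xE: "x \<noteq> Eps" using px proper_def by simp
        have "approx (blocks_word cs) (map f bw)" using cnfm \<open>cnf (blocks_word cs) = f Sig # Jw cs\<close>
          approx_iff sim_refl by metis
        then have c1: "count_list (blocks_word cs) x = count_list (map f bw) x" using count_approx xE by blast
        have "even (count_list (map f bw) x)"
        proof (cases "x = y")
          case True
          have "\<And>c. f c \<noteq> x" using True False py unfolding f_def proper_def by auto
          then show ?thesis using count_map_none[of f x bw] by simp
        next
          case xy: False
          have "\<And>c. f c = x \<longleftrightarrow> c = x" using xy False px unfolding f_def proper_def by auto
          then show ?thesis using count_map_id[of f x bw] evc[OF px] by simp
        qed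
        then show ?thesis using c1 sum_blocks[OF cs(1), of x] px by simp
      next
        case False
        then show ?thesis using sum_blocks[OF cs(1), of x] by simp
      qed
    qed
    show ?thesis unfolding s_word_def using eq cs(1) ev by blast
  next
    case True
    obtain b where b: "proper_letters w - {y} = {b}"
      using card_1_singletonE[of "proper_letters w - {y}"] card_Diff_singleton[of y "proper_letters w"] True yin PL by auto
    have pb: "proper b" using b unfolding proper_letters_def by auto
    have by': "b \<noteq> y" using b by auto
    have theb: "(THE b. proper_letters w - {y} = {b}) = b" using b by auto
    have fdef: "f = (\<lambda>c. if c = y then Eps else if c = Sig then b else c)"
      using True theb unfolding f_def by (simp add: Let_def)
    have fSig: "f Sig = b" using fdef py proper_def by auto
    have allb: "\<forall>c\<in>set cs. fst c = b" using cs(2) PLw b by blast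
    have csne: "cs \<noteq> []" using cs(1) blocks_ok_def by simp
    have len1: "length cs = 1"
    proof (rule ccontr)
      assume "length cs \<noteq> 1"
      then have "1 < length cs" using csne by (cases cs) auto
      then have "fst (cs ! 0) \<noteq> fst (cs ! 1)" using blocks_okD(3)[OF cs(1), of 0] csne by simp
      moreover have "cs ! 0 \<in> set cs" "cs ! 1 \<in> set cs" using \<open>1 < length cs\<close> by (auto intro!: nth_mem)
      ultimately show False using allb by simp
    qed
    then obtain c where "cs = [c]" by (cases cs) auto
    moreover obtain m where "c = (b, m)" using allb \<open>cs = [c]\<close> by (cases c) auto
    ultimately have csm: "cs = [(b, m)]" by simp
    have Jcs: "Jw cs = replicate m b" using csm by (simp add: Jw_def)
    define t where "t = replicate (Suc m) b"
    have bE: "b \<noteq> Eps" using pb proper_def by simp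
    have "cnf t = f Sig # Jw cs"
      using cnf_target[of b "replicate m b"] bE nf_rep_proper[of b m "[]"] fSig Jcs t_def by simp
    then have eq: "cls (proj y w) = cls t" using key by blast
    have "approx t (map f bw)" using cnfm \<open>cnf t = f Sig # Jw cs\<close> approx_iff sim_refl by metis
    then have "count_list t b = count_list (map f bw) b" using count_approx bE by blast
    also have "\<dots> = count_list bw b + count_list bw Sig"
    proof (rule count_map_two)
      fix c show "f c = b \<longleftrightarrow> c = b \<or> c = Sig" using fdef by' bE pb py proper_def by auto
    next
      show "b \<noteq> Sig" using pb proper_def by simp
    qed
    also have "count_list bw Sig = 1"
    proof -
      have "Sig \<notin> set (Jw bs)" using set_Jw[of bs] blocks_proper[OF ok] proper_def by fastforce
      then show ?thesis using bw_def blocks_word_Jw by simp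
    qed
    finally have "odd (Suc m)" using evc[OF pb] t_def count_rep[of "Suc m" b b] by simp
    then show ?thesis unfolding s_word_def using eq pb t_def by blast
  qed
qed


end
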